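(* Let $0<\alpha<1$, $T>0$, $N\ge1$, and let $\beta_0,\beta_1,\dots,\beta_N>0$ and $\tau_1,\dots,\tau_N>0$. Let $f:[0,T]\to\mathbb{R}$ with $f\in W^{3,\infty}(0,T)$. Divide $[0,T]$ into $N_T$ equal steps of size $\Delta_t=T/N_T$, with time points $t_n=n\Delta_t$, $n=0,\dots,N_T$, and put $f^n=f(t_n)$. For $k=1,\dots,N$ let $$q_k(t)=\int_0^t\beta_k\exp\!\Big[\frac{s-t}{\tau_k}\Big]f'(s)\,ds,$$ i.e. the solution of $q_k'(t)+\frac{1}{\tau_k}q_k(t)=\beta_k f'(t)$ with $q_k(0)=0$, and define the continuous Prony approximation $\hat D_t^\alpha f=\beta_0 f'(t)+\sum_{k=1}^N q_k(t)$. Define discrete values $q_k^n$ by $q_k^0=q_k(0)$ and $$q_k^n=e_k^2q_k^{n-1}+e_k\beta_k\,(f^n-f^{n-1}),\qquad e_k=\exp[-\Delta_t/(2\tau_k)],\quad n\ge1,$$ and the discrete Prony approximation $$\hat{\mathrm D}_n^\alpha f=\frac{\beta_0}{\Delta_t}(f^n-f^{n-1})+\sum_{k=1}^N q_k^n.$$ Then for any $t_n\in\{t_1,\dots,t_{N_T}\}$ $$\big|\hat D_{t_n}^\alpha f-\hat{\mathrm D}_n^\alpha f\big|\le \Delta_t\big(\beta_0/2+C(\boldsymbol\beta,\boldsymbol\tau)\Delta_t\big)\|f\|_{W^{3,\infty}(0,T)},$$ where $C(\boldsymbol\beta,\boldsymbol\tau)>0$ is a constant depending on the chosen $\beta_k,\tau_k$,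 $k=1,\dots,N$.
   Context: $W^{3,\infty}(0,T)$ is the Sobolev space of functions whose derivatives up to order $3$ are essentially bounded on $(0,T)$, with norm $\|f\|_{W^{3,\infty}(0,T)}$ controlling the $L^\infty$ norms of $f,f',f'',f'''$. $\boldsymbol\beta=(\beta_1,\dots,\beta_N)$, $\boldsymbol\tau=(\tau_1,\dots,\tau_N)$. *)

theory Defs
  imports "HOL-Analysis.Analysis"
begin

text \<open>f belongs to W^{3,infinity}(0,T), with classical derivatives f1 = f', f2 = f''
  on [0,T] (one-sided at the endpoints) and f'' Lipschitz (i.e. f''' essentially bounded).\<close>
definition W3inf :: "real \<Rightarrow> (real \<Rightarrow> real) \<Rightarrow> (real \<Rightarrow> real) \<Rightarrow> (real \<Rightarrow> real) \<Rightarrow> bool" where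
  "W3inf T f f1 f2 \<longleftrightarrow>
     (\<forall>t\<in>{0..T}. (f has_real_derivative f1 t) (at t within {0..T}) \<and>
                 (f1 has_real_derivative f2 t) (at t within {0..T})) \<and>
     (\<exists>L. L-lipschitz_on {0..T} f2)"

text \<open>W^{3,infinity}(0,T) norm: max of the sup norms of f, f', f'' and of f''' ;
  the latter equals the best Lipschitz constant of f''.\<close>
definition w3_norm :: "real \<Rightarrow> (real \<Rightarrow> real) \<Rightarrow> (real \<Rightarrow> real) \<Rightarrow> (real \<Rightarrow> real) \<Rightarrow> real" where
  "w3_norm T f f1 f2 =
     max (max (SUP t\<in>{0..T}. \<bar>f t\<bar>) (SUP t\<in>{0..T}. \<bar>f1 t\<bar>))
         (max (SUP t\<in>{0..T}. \<bar>f2 t\<bar>) (INF L\<in>{L. L-lipschitz_on {0..T} f2}. L))"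

definition q_cont :: "(nat \<Rightarrow> real) \<Rightarrow> (nat \<Rightarrow> real) \<Rightarrow> (real \<Rightarrow> real) \<Rightarrow> nat \<Rightarrow> real \<Rightarrow> real" where
  "q_cont \<beta> \<tau> f1 k t = integral {0..t} (\<lambda>s. \<beta> k * exp ((s - t) / \<tau> k) * f1 s)"

definition prony_cont :: "nat \<Rightarrow> (nat \<Rightarrow> real) \<Rightarrow> (nat \<Rightarrow> real) \<Rightarrow> (real \<Rightarrow> real) \<Rightarrow> real \<Rightarrow> real" where
  "prony_cont N \<beta> \<tau> f1 t = \<beta> 0 * f1 t + (\<Sum>k=1..N. q_cont \<beta> \<tau> f1 k t)"

text \<open>discrete values q_k^n with time step dt; q_k^0 = q_k(0) = 0\<close>
primrec q_disc :: "(nat \<Rightarrow> real) \<Rightarrow> (nat \<Rightarrow> real) \<Rightarrow> (real \<Rightarrow> real) \<Rightarrow> real \<Rightarrow> nat \<Rightarrow> nat \<Rightarrow> real" where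
  "q_disc \<beta> \<tau> f dt k 0 = 0"
| "q_disc \<beta> \<tau> f dt k (Suc n) =
     (exp (- dt / (2 * \<tau> k)))\<^sup>2 * q_disc \<beta> \<tau> f dt k n
     + exp (- dt / (2 * \<tau> k)) * \<beta> k * (f (real (Suc n) * dt) - f (real n * dt))"

definition prony_disc :: "nat \<Rightarrow> (nat \<Rightarrow> real) \<Rightarrow> (nat \<Rightarrow> real) \<Rightarrow> (real \<Rightarrow> real) \<Rightarrow> real \<Rightarrow> nat \<Rightarrow> real" where
  "prony_disc N \<beta> \<tau> f dt n =
     \<beta> 0 / dt * (f (real n * dt) - f (real (n - 1) * dt)) + (\<Sum>k=1..N. q_disc \<beta> \<tau> f dt k n)"

end

theory Submission
  imports Defs
begin

lemma ftc_sub: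
  assumes d: "\<forall>t\<in>{0..T}. (h has_real_derivative h' t) (at t within {0..T})"
    and ab: "0 \<le> a" "a \<le> b" "b \<le> T"
  shows "(h' has_integral (h b - h a)) {a..b}"
proof (rule fundamental_theorem_of_calculus[OF ab(2)])
  fix x assume x: "x \<in> {a..b}"
  hence "(h has_real_derivative h' x) (at x within {0..T})" using d ab by auto
  hence "(h has_real_derivative h' x) (at x within {a..b})"
    by (rule DERIV_subset) (use ab in auto)
  thus "(h has_vector_derivative h' x) (at x within {a..b})"
    using has_real_derivative_iff_has_vector_derivative by blast
qed

lemma lip_from_deriv:
  assumes d: "\<forall>t\<in>{0..T}. (h has_real_derivative h' t) (at t within {0..T})"
    and bd: "\<forall>t\<in>{0..T}. \<bar>h' t\<bar> \<le> M"
    and x: "x \<in> {0..T}" and y: "y \<in> {0..T}"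
  shows "\<bar>h x - h y\<bar> \<le> M * \<bar>x - y\<bar>"
proof -
  have M0: "0 \<le> M" using bd x by force
  have *: "\<bar>h v - h u\<bar> \<le> M * (v - u)" if "u \<in> {0..T}" "v \<in> {0..T}" "u \<le> v" for u v
  proof -
    have I: "(h' has_integral (h v - h u)) {u..v}" using ftc_sub[OF d] that by auto
    show ?thesis
      using has_integral_bound[OF M0, of h' "h v - h u" u v] I bd that by auto
  qed
  show ?thesis
  proof (cases "x \<le> y")
    case True thus ?thesis using *[OF x y True] by (simp add: abs_minus_commute)
  next
    case False thus ?thesis using *[OF y x] x y by simp
  qed
qed


lemma norm_bounds:
  assumes W: "W3inf T f f1 f2"
  shows "\<forall>t\<in>{0..T}. \<bar>f1 t\<bar> \<le> w3_norm T f f1 f2"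
    and "\<forall>t\<in>{0..T}. \<bar>f2 t\<bar> \<le> w3_norm T f f1 f2"
proof -
  have c1: "continuous_on {0..T} f1"
    using W unfolding W3inf_def by (intro DERIV_continuous_on) blast
  obtain L where L: "L-lipschitz_on {0..T} f2" using W unfolding W3inf_def by blast
  have c2: "continuous_on {0..T} f2" by (rule lipschitz_on_continuous_on[OF L])
  have b1: "bdd_above ((\<lambda>t. \<bar>f1 t\<bar>) ` {0..T})"
    by (intro bounded_imp_bdd_above compact_imp_bounded compact_continuous_image continuous_intros c1) simp
  have b2: "bdd_above ((\<lambda>t. \<bar>f2 t\<bar>) ` {0..T})"
    by (intro bounded_imp_bdd_above compact_imp_bounded compact_continuous_image continuous_intros c2) simp
  show "\<forall>t\<in>{0..T}. \<bar>f1 t\<bar> \<le> w3_norm T f f1 f2"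
  proof
    fix t assume t: "t \<in> {0..T}"
    have "\<bar>f1 t\<bar> \<le> (SUP t\<in>{0..T}. \<bar>f1 t\<bar>)" by (rule cSUP_upper[OF t b1])
    thus "\<bar>f1 t\<bar> \<le> w3_norm T f f1 f2" unfolding w3_norm_def by linarith
  qed
  show "\<forall>t\<in>{0..T}. \<bar>f2 t\<bar> \<le> w3_norm T f f1 f2"
  proof
    fix t assume t: "t \<in> {0..T}"
    have "\<bar>f2 t\<bar> \<le> (SUP t\<in>{0..T}. \<bar>f2 t\<bar>)" by (rule cSUP_upper[OF t b2])
    thus "\<bar>f2 t\<bar> \<le> w3_norm T f f1 f2" unfolding w3_norm_def by linarith
  qed
qed

lemma exp_sinh_bound:
  fixes x :: real assumes "0 \<le> x" "x \<le> 1/2"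
  shows "\<bar>exp x - exp (-x) - 2 * x\<bar> \<le> x ^ 3"
proof -
  obtain t1 where t1: "\<bar>t1\<bar> \<le> \<bar>x\<bar>" "exp x = (\<Sum>m<3. (x ^ m) / fact m) + (exp t1 / fact 3) * x ^ 3"
    using Maclaurin_exp_le by blast
  obtain t2 where t2: "\<bar>t2\<bar> \<le> \<bar>-x\<bar>" "exp (-x) = (\<Sum>m<3. ((-x) ^ m) / fact m) + (exp t2 / fact 3) * (-x) ^ 3"
    using Maclaurin_exp_le by blast
  have "t1 \<le> 1" "t2 \<le> 1" using t1(1) t2(1) assms by auto
  hence "exp t1 \<le> exp 1" "exp t2 \<le> exp 1" by simp_all
  hence e1: "exp t1 \<le> 3" and e2: "exp t2 \<le> 3" using exp_le by linarith+
  have eq: "exp x - exp (-x) - 2 * x = (exp t1 + exp t2) / 6 * x ^ 3"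
    using t1(2) t2(2) by (simp add: eval_nat_numeral fact_numeral field_simps)
  have c0: "0 \<le> (exp t1 + exp t2) / 6" by (simp add: add_nonneg_nonneg)
  have c1: "(exp t1 + exp t2) / 6 \<le> 1" using e1 e2 by (simp add: field_simps)
  have x3: "0 \<le> x ^ 3" using assms by simp
  have "\<bar>exp x - exp (-x) - 2 * x\<bar> = (exp t1 + exp t2) / 6 * x ^ 3"
    unfolding eq using c0 x3 by simp
  also have "\<dots> \<le> 1 * x ^ 3" by (rule mult_right_mono[OF c1 x3])
  finally show ?thesis by simp
qed

lemma one_minus_exp_lower:
  fixes y :: real assumes "0 \<le> y" "y \<le> 1"
  shows "y / 2 \<le> 1 - exp (-y)"
proof -
  have "1 + y \<le> exp y" by (rule exp_ge_add_one_self)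
  hence "exp (-y) \<le> 1 / (1 + y)" using assms by (simp add: exp_minus field_simps)
  moreover have "y * y \<le> y" using assms by (simp add: mult_left_le_one_le)
  hence "1 \<le> (1 - y / 2) * (1 + y)" by (simp add: algebra_simps)
  hence "1 / (1 + y) \<le> 1 - y / 2" using assms by (simp add: divide_le_eq)
  ultimately show ?thesis by linarith
qed

lemma exp_lip_nonpos:
  fixes u v :: real assumes "u \<le> 0" "v \<le> 0"
  shows "\<bar>exp u - exp v\<bar> \<le> \<bar>u - v\<bar>"
proof -
  have *: "exp q - exp p \<le> q - p" if "p \<le> q" "q \<le> 0" for p q :: real
  proof -
    have "exp q - exp p = exp q * (1 - exp (p - q))" by (simp add: exp_diff field_simps)
    also have "\<dots> \<le> 1 * (q - p)"
    proof (rule mult_mono)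
      show "exp q \<le> 1" using that by simp
      show "1 - exp (p - q) \<le> q - p" using exp_ge_add_one_self[of "p - q"] by linarith
      show "0 \<le> 1 - exp (p - q)" using that by simp
    qed simp
    finally show ?thesis by simp
  qed
  show ?thesis
  proof (cases "u \<le> v")
    case True thus ?thesis using *[of u v] assms by simp
  next
    case False thus ?thesis using *[of v u] assms by simp
  qed
qed

lemma q_cont_step:
  assumes W: "W3inf T f f1 f2" and ab: "0 \<le> a" "a \<le> b" "b \<le> T" and tk: "\<tau> k \<noteq> 0"
  shows "q_cont \<beta> \<tau> f1 k b = exp (-(b - a) / \<tau> k) * q_cont \<beta> \<tau> f1 k a
           + \<beta> k * integral {a..b} (\<lambda>s. exp ((s - b) / \<tau> k) * f1 s)"
proof -
  have c1: "continuous_on {0..T} f1"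
    using W unfolding W3inf_def by (intro DERIV_continuous_on) blast
  have c: "continuous_on {0..b} f1" using continuous_on_subset[OF c1] ab by auto
  have int: "(\<lambda>s. \<beta> k * exp ((s - b) / \<tau> k) * f1 s) integrable_on {0..b}"
    by (intro integrable_continuous_interval continuous_intros c) (simp add: tk)
  have "q_cont \<beta> \<tau> f1 k b = integral {0..a} (\<lambda>s. \<beta> k * exp ((s - b) / \<tau> k) * f1 s)
        + integral {a..b} (\<lambda>s. \<beta> k * exp ((s - b) / \<tau> k) * f1 s)"
    unfolding q_cont_def using Henstock_Kurzweil_Integration.integral_combine[OF ab(1,2) int] by simp
  also have "integral {0..a} (\<lambda>s. \<beta> k * exp ((s - b) / \<tau> k) * f1 s)
      = integral {0..a} (\<lambda>s. exp (-(b - a) / \<tau> k) * (\<beta> k * exp ((s - a) / \<tau> k) * f1 s))"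
  proof (rule integral_cong)
    fix x
    have "(x - a) / \<tau> k + (-(b - a)) / \<tau> k = ((x - a) + (-(b - a))) / \<tau> k"
      by (rule add_divide_distrib[symmetric])
    also have "\<dots> = (x - b) / \<tau> k" by simp
    finally have "exp ((x - b) / \<tau> k) = exp ((x - a) / \<tau> k) * exp (-(b - a) / \<tau> k)"
      by (metis exp_add minus_divide_left)
    thus "\<beta> k * exp ((x - b) / \<tau> k) * f1 x = exp (-(b - a) / \<tau> k) * (\<beta> k * exp ((x - a) / \<tau> k) * f1 x)"
      by simp
  qed
  also have "\<dots> = exp (-(b - a) / \<tau> k) * q_cont \<beta> \<tau> f1 k a"
    unfolding q_cont_def using tk by simp
  also have "integral {a..b} (\<lambda>s. \<beta> k * exp ((s - b) / \<tau> k) * f1 s)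
      = \<beta> k * integral {a..b} (\<lambda>s. exp ((s - b) / \<tau> k) * f1 s)"
    using tk by (simp add: mult.assoc)
  finally show ?thesis .
qed


lemma local_crude:
  fixes \<tau> :: real
  assumes d1: "\<forall>t\<in>{0..T}. (f has_real_derivative f1 t) (at t within {0..T})"
    and c1: "continuous_on {0..T} f1"
    and b1: "\<forall>t\<in>{0..T}. \<bar>f1 t\<bar> \<le> M"
    and ab: "0 \<le> a" "a \<le> b" "b \<le> T" and tau: "0 < \<tau>"
  shows "\<bar>integral {a..b} (\<lambda>s. exp ((s - b) / \<tau>) * f1 s) - exp (-(b - a) / (2 * \<tau>)) * (f b - f a)\<bar>
         \<le> 2 * M * (b - a)"
proof -
  have M0: "0 \<le> M" using b1 ab by force
  have c: "continuous_on {a..b} f1" using continuous_on_subset[OF c1] ab by auto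
  have int: "((\<lambda>s. exp ((s - b) / \<tau>) * f1 s) has_integral integral {a..b} (\<lambda>s. exp ((s - b) / \<tau>) * f1 s)) {a..b}"
    by (intro integrable_integral integrable_continuous_interval continuous_intros c) (use tau in simp)
  have bd: "norm (exp ((s - b) / \<tau>) * f1 s) \<le> M" if "s \<in> cbox a b" for s
  proof -
    have "exp ((s - b) / \<tau>) \<le> 1" using that tau by (simp add: divide_le_0_iff)
    moreover have "\<bar>f1 s\<bar> \<le> M" using b1 that ab by auto
    ultimately have "exp ((s - b) / \<tau>) * \<bar>f1 s\<bar> \<le> 1 * M" by (intro mult_mono) auto
    thus ?thesis by (simp add: abs_mult)
  qed
  have J: "\<bar>integral {a..b} (\<lambda>s. exp ((s - b) / \<tau>) * f1 s)\<bar> \<le> M * (b - a)"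
    using has_integral_bound[OF M0 int[unfolded box_real(2)[symmetric]]] bd ab by simp
  have D: "\<bar>f b - f a\<bar> \<le> M * (b - a)"
    using lip_from_deriv[OF d1 b1, of b a] ab by simp
  have e1: "exp (-(b - a) / (2 * \<tau>)) \<le> 1" using ab tau by (simp add: divide_le_0_iff)
  have "exp (-(b - a) / (2 * \<tau>)) * \<bar>f b - f a\<bar> \<le> 1 * (M * (b - a))"
    by (rule mult_mono[OF e1 D]) simp_all
  hence "\<bar>exp (-(b - a) / (2 * \<tau>)) * (f b - f a)\<bar> \<le> 1 * (M * (b - a))"
    by (simp add: abs_mult)
  thus ?thesis using J by (simp add: abs_le_iff)
qed

lemma exp_antideriv: "0 < (\<tau>::real) \<Longrightarrow> ((\<lambda>s. \<tau> * exp ((s - b) / \<tau>)) has_real_derivative exp ((x - b) / \<tau>)) (at x within S)"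
proof -
  assume tau: "0 < \<tau>"
  have "((\<lambda>s. (s - b) / \<tau>) has_real_derivative (1 - 0) / \<tau>) (at x)"
    by (intro DERIV_cdivide derivative_intros)
  hence "((\<lambda>s. \<tau> * exp ((s - b) / \<tau>)) has_real_derivative \<tau> * (exp ((x - b) / \<tau>) * ((1 - 0) / \<tau>))) (at x)"
    by (intro DERIV_cmult DERIV_fun_exp)
  hence "((\<lambda>s. \<tau> * exp ((s - b) / \<tau>)) has_real_derivative exp ((x - b) / \<tau>)) (at x)"
    using tau by simp
  thus ?thesis by (rule has_field_derivative_at_within)
qed
lemma local_fine:
  fixes \<tau> :: real
  assumes d1: "\<forall>t\<in>{0..T}. (f has_real_derivative f1 t) (at t within {0..T})"
    and d2: "\<forall>t\<in>{0..T}. (f1 has_real_derivative f2 t) (at t within {0..T})"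
    and c1: "continuous_on {0..T} f1"
    and b1: "\<forall>t\<in>{0..T}. \<bar>f1 t\<bar> \<le> M"
    and b2: "\<forall>t\<in>{0..T}. \<bar>f2 t\<bar> \<le> M"
    and ab: "0 \<le> a" "a < b" "b \<le> T" and tau: "0 < \<tau>" and small: "b - a \<le> \<tau>"
  shows "\<bar>integral {a..b} (\<lambda>s. exp ((s - b) / \<tau>) * f1 s) - exp (-(b - a) / (2 * \<tau>)) * (f b - f a)\<bar>
         \<le> M * ((b - a) ^ 3 / (4 * \<tau>) + (b - a) ^ 3 / (8 * \<tau> ^ 2))"
proof -
  define \<Delta> where "\<Delta> = b - a"
  define m where "m = (a + b) / 2"
  define e where "e = exp (-(b - a) / (2 * \<tau>))"
  define r where "r = exp (-(b - a) / \<tau>)"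
  define J where "J = integral {a..b} (\<lambda>s. exp ((s - b) / \<tau>) * f1 s)"
  have M0: "0 \<le> M" using b1 ab by force
  have \<Delta>0: "0 < \<Delta>" using ab by (simp add: \<Delta>_def)
  have c: "continuous_on {a..b} f1" using continuous_on_subset[OF c1] ab by auto
  have I1: "((\<lambda>s. exp ((s - b) / \<tau>) * f1 s) has_integral J) {a..b}" unfolding J_def
    by (intro integrable_integral integrable_continuous_interval continuous_intros c) (use tau in simp)
  have I2: "(f1 has_integral (f b - f a)) {a..b}" using ftc_sub[OF d1, of a b] ab by simp
  have I3: "((\<lambda>s. exp ((s - b) / \<tau>)) has_integral (\<tau> - \<tau> * r)) {a..b}"
  proof -
    have "((\<lambda>s. exp ((s - b) / \<tau>)) has_integral (\<tau> * exp ((b - b) / \<tau>) - \<tau> * exp ((a - b) / \<tau>))) {a..b}"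
    proof (rule fundamental_theorem_of_calculus)
      show "a \<le> b" using ab by simp
      fix x assume "x \<in> {a..b}"
      have "((\<lambda>s. \<tau> * exp ((s - b) / \<tau>)) has_real_derivative exp ((x - b) / \<tau>)) (at x within {a..b})"
        using exp_antideriv[OF tau] .
      thus "((\<lambda>s. \<tau> * exp ((s - b) / \<tau>)) has_vector_derivative exp ((x - b) / \<tau>)) (at x within {a..b})"
        using has_real_derivative_iff_has_vector_derivative by blast
    qed
    then show ?thesis unfolding r_def by simp
  qed
  have I4: "((\<lambda>s. e * f1 m) has_integral (e * f1 m * \<Delta>)) {a..b}"
    using has_integral_const_real[of "e * f1 m" a b] ab by (simp add: \<Delta>_def mult.commute)
  have Ih: "((\<lambda>s. exp ((s - b) / \<tau>) * f1 s - e * f1 s - f1 m * exp ((s - b) / \<tau>) + e * f1 m)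
       has_integral (J - e * (f b - f a) - f1 m * (\<tau> - \<tau> * r) + e * f1 m * \<Delta>)) {a..b}"
    by (rule has_integral_add[OF has_integral_diff[OF has_integral_diff[OF I1 has_integral_mult_right[OF I2, of e]] has_integral_mult_right[OF I3, of "f1 m"]] I4])
  have m_in: "m \<in> {0..T}" using ab by (simp add: m_def)
  have em: "e = exp ((m - b) / \<tau>)" unfolding e_def m_def by (simp add: field_simps)
  have hb: "norm (exp ((s - b) / \<tau>) * f1 s - e * f1 s - f1 m * exp ((s - b) / \<tau>) + e * f1 m)
            \<le> M * \<Delta>\<^sup>2 / (4 * \<tau>)" if s: "s \<in> cbox a b" for s
  proof -
    have s': "s \<in> {0..T}" using s ab by auto
    have sab: "a \<le> s" "s \<le> b" using s by auto
    have sm: "\<bar>s - m\<bar> \<le> \<Delta> / 2" unfolding m_def \<Delta>_def abs_le_iff using sab by (simp add: field_simps)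
    have "\<bar>exp ((s - b) / \<tau>) - e\<bar> \<le> \<bar>(s - b) / \<tau> - (m - b) / \<tau>\<bar>"
      unfolding em using s ab tau by (intro exp_lip_nonpos) (auto simp: m_def divide_le_0_iff)
    also have "\<dots> = \<bar>s - m\<bar> / \<tau>" using tau by (simp add: diff_divide_distrib[symmetric])
    also have "\<dots> \<le> (\<Delta> / 2) / \<tau>" by (rule divide_right_mono[OF sm]) (use tau in simp)
    finally have A: "\<bar>exp ((s - b) / \<tau>) - e\<bar> \<le> (\<Delta> / 2) / \<tau>" .
    have "\<bar>f1 s - f1 m\<bar> \<le> M * \<bar>s - m\<bar>" by (rule lip_from_deriv[OF d2 b2 s' m_in])
    also have "\<dots> \<le> M * (\<Delta> / 2)" by (rule mult_left_mono[OF sm M0])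
    finally have B: "\<bar>f1 s - f1 m\<bar> \<le> M * (\<Delta> / 2)" .
    have "norm (exp ((s - b) / \<tau>) * f1 s - e * f1 s - f1 m * exp ((s - b) / \<tau>) + e * f1 m)
        = \<bar>exp ((s - b) / \<tau>) - e\<bar> * \<bar>f1 s - f1 m\<bar>"
      by (simp add: abs_mult[symmetric] algebra_simps)
    also have "\<dots> \<le> ((\<Delta> / 2) / \<tau>) * (M * (\<Delta> / 2))"
      by (rule mult_mono[OF A B]) (use \<Delta>0 tau in auto)
    also have "\<dots> = M * \<Delta>\<^sup>2 / (4 * \<tau>)" by (simp add: power2_eq_square field_simps)
    finally show ?thesis .
  qed
  have H: "\<bar>J - e * (f b - f a) - f1 m * (\<tau> - \<tau> * r) + e * f1 m * \<Delta>\<bar> \<le> M * \<Delta>\<^sup>2 / (4 * \<tau>) * \<Delta>"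
    using has_integral_bound[of "M * \<Delta>\<^sup>2 / (4 * \<tau>)", OF _ Ih[unfolded box_real(2)[symmetric]]] hb M0 tau ab
    by (simp add: \<Delta>_def)
  define x where "x = \<Delta> / (2 * \<tau>)"
  have x0: "0 \<le> x" and x1: "x \<le> 1/2" using \<Delta>0 tau small by (auto simp: x_def \<Delta>_def field_simps)
  have ex: "e = exp (-x)" unfolding e_def x_def \<Delta>_def by (simp add: minus_divide_left)
  have rx: "r = exp (-x) * exp (-x)"
  proof -
    have "-(b - a) / \<tau> = -x + -x" unfolding x_def \<Delta>_def using tau by (simp add: field_simps)
    thus ?thesis unfolding r_def by (metis exp_add)
  qed
  have key: "\<tau> - \<tau> * r - e * \<Delta> = \<tau> * exp (-x) * (exp x - exp (-x) - 2 * x)"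
    unfolding rx ex using tau by (simp add: x_def algebra_simps exp_minus field_simps)
  have "\<bar>\<tau> - \<tau> * r - e * \<Delta>\<bar> = \<tau> * exp (-x) * \<bar>exp x - exp (-x) - 2 * x\<bar>"
    unfolding key using tau by (simp add: abs_mult)
  also have "\<dots> \<le> \<tau> * 1 * x ^ 3"
    by (intro mult_mono exp_sinh_bound x0 x1) (use tau x0 in auto)
  also have "\<dots> = \<Delta> ^ 3 / (8 * \<tau> ^ 2)" using tau by (simp add: x_def power3_eq_cube power2_eq_square field_simps)
  finally have G: "\<bar>\<tau> - \<tau> * r - e * \<Delta>\<bar> \<le> \<Delta> ^ 3 / (8 * \<tau> ^ 2)" .
  have fm: "\<bar>f1 m\<bar> \<le> M" using b1 m_in by auto
  have "\<bar>f1 m * (\<tau> - \<tau> * r - e * \<Delta>)\<bar> \<le> M * (\<Delta> ^ 3 / (8 * \<tau> ^ 2))"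
    unfolding abs_mult by (rule mult_mono[OF fm G]) (use M0 in auto)
  moreover have "J - e * (f b - f a) = (J - e * (f b - f a) - f1 m * (\<tau> - \<tau> * r) + e * f1 m * \<Delta>)
      + f1 m * (\<tau> - \<tau> * r - e * \<Delta>)" by (simp add: algebra_simps)
  moreover have "M * \<Delta>\<^sup>2 / (4 * \<tau>) * \<Delta> = M * (\<Delta> ^ 3 / (4 * \<tau>))"
    by (simp add: power2_eq_square power3_eq_cube)
  ultimately have "\<bar>J - e * (f b - f a)\<bar> \<le> M * (\<Delta> ^ 3 / (4 * \<tau>)) + M * (\<Delta> ^ 3 / (8 * \<tau> ^ 2))"
    using H by (smt (verit))
  thus ?thesis unfolding J_def e_def \<Delta>_def by (simp add: distrib_left)
qed


lemma propagate:
  fixes E l :: "nat \<Rightarrow> real"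
  assumes E0: "E 0 = 0" and ES: "\<And>n. n < K \<Longrightarrow> E (Suc n) = r * E n + l n"
    and lb: "\<And>n. n < K \<Longrightarrow> \<bar>l n\<bar> \<le> L" and r: "0 \<le> r" "r < 1" and L: "0 \<le> L"
  shows "n \<le> K \<Longrightarrow> \<bar>E n\<bar> \<le> L / (1 - r)"
proof (induction n)
  case 0 thus ?case using E0 L r by simp
next
  case (Suc n)
  hence n: "n < K" by simp
  have IH: "\<bar>E n\<bar> \<le> L / (1 - r)" using Suc n by simp
  have "\<bar>E (Suc n)\<bar> \<le> r * \<bar>E n\<bar> + \<bar>l n\<bar>" using ES[OF n] r by (simp add: abs_mult abs_triangle_ineq order_trans[OF abs_triangle_ineq])
  also have "\<dots> \<le> r * (L / (1 - r)) + L" using IH lb[OF n] r by (intro add_mono mult_left_mono) auto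
  also have "\<dots> = L / (1 - r)" using r by (simp add: field_simps)
  finally show ?case .
qed


lemma qk_error:
  assumes W: "W3inf T f f1 f2" and T: "0 < T" and NT: "1 \<le> NT" and tau: "0 < \<tau> k" and bk: "0 \<le> \<beta> k"
    and b1: "\<forall>t\<in>{0..T}. \<bar>f1 t\<bar> \<le> M" and b2: "\<forall>t\<in>{0..T}. \<bar>f2 t\<bar> \<le> M" and n: "n \<le> NT"
  shows "\<bar>q_cont \<beta> \<tau> f1 k (real n * (T / real NT)) - q_disc \<beta> \<tau> f (T / real NT) k n\<bar>
         \<le> \<beta> k * (1/2 + 1/(4 * \<tau> k) + 4 / \<tau> k) * (T / real NT)^2 * M"
proof -
  define \<Delta> where "\<Delta> = T / real NT"
  define r where "r = exp (-\<Delta> / \<tau> k)"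
  define E where "E n = q_cont \<beta> \<tau> f1 k (real n * \<Delta>) - q_disc \<beta> \<tau> f \<Delta> k n" for n
  define l where "l n = \<beta> k * (integral {real n * \<Delta>..real (Suc n) * \<Delta>}
      (\<lambda>s. exp ((s - real (Suc n) * \<Delta>) / \<tau> k) * f1 s)
      - exp (-\<Delta> / (2 * \<tau> k)) * (f (real (Suc n) * \<Delta>) - f (real n * \<Delta>)))" for n
  define L where "L = (if \<Delta> \<le> \<tau> k then \<beta> k * (M * (\<Delta> ^ 3 / (4 * \<tau> k) + \<Delta> ^ 3 / (8 * \<tau> k ^ 2)))
                        else \<beta> k * (2 * M * \<Delta>))"
  have \<Delta>0: "0 < \<Delta>" using T NT by (simp add: \<Delta>_def)
  have tn: "real j * \<Delta> \<le> T" if "j \<le> NT" for j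
  proof -
    have "real j * \<Delta> \<le> real NT * \<Delta>" using that \<Delta>0 by (intro mult_right_mono) auto
    also have "\<dots> = T" using NT by (simp add: \<Delta>_def)
    finally show ?thesis .
  qed
  have d1: "\<forall>t\<in>{0..T}. (f has_real_derivative f1 t) (at t within {0..T})"
   and d2: "\<forall>t\<in>{0..T}. (f1 has_real_derivative f2 t) (at t within {0..T})"
    using W unfolding W3inf_def by auto
  have c1: "continuous_on {0..T} f1" using d2 by (intro DERIV_continuous_on) blast
  have M0: "0 \<le> M" using b1 T by force
  have E0: "E 0 = 0" unfolding E_def q_cont_def by simp
  have dd: "real (Suc j) * \<Delta> - real j * \<Delta> = \<Delta>" for j by (simp add: algebra_simps)
  have e2: "(exp (-\<Delta> / (2 * \<tau> k)))\<^sup>2 = r"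
  proof -
    have "-\<Delta> / \<tau> k = -\<Delta> / (2 * \<tau> k) + -\<Delta> / (2 * \<tau> k)" using tau by (simp add: field_simps)
    thus ?thesis unfolding r_def by (metis exp_add power2_eq_square)
  qed
  have ES: "E (Suc j) = r * E j + l j" if j: "j < NT" for j
  proof -
    have a0: "0 \<le> real j * \<Delta>" using \<Delta>0 by simp
    have ab: "real j * \<Delta> \<le> real (Suc j) * \<Delta>" using \<Delta>0 by (intro mult_right_mono) auto
    have bT: "real (Suc j) * \<Delta> \<le> T" by (rule tn) (use j in simp)
    have "q_cont \<beta> \<tau> f1 k (real (Suc j) * \<Delta>) = r * q_cont \<beta> \<tau> f1 k (real j * \<Delta>)
        + \<beta> k * integral {real j * \<Delta>..real (Suc j) * \<Delta>} (\<lambda>s. exp ((s - real (Suc j) * \<Delta>) / \<tau> k) * f1 s)"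
      using q_cont_step[OF W a0 ab bT, of \<tau> k \<beta>] tau unfolding dd r_def by simp
    thus ?thesis unfolding E_def l_def using e2 by (simp add: algebra_simps)
  qed
  have lb: "\<bar>l j\<bar> \<le> L" if j: "j < NT" for j
  proof -
    have a0: "0 \<le> real j * \<Delta>" using \<Delta>0 by simp
    have ab: "real j * \<Delta> < real (Suc j) * \<Delta>" using \<Delta>0 by simp
    have bT: "real (Suc j) * \<Delta> \<le> T" by (rule tn) (use j in simp)
    have "\<bar>l j\<bar> = \<beta> k * \<bar>integral {real j * \<Delta>..real (Suc j) * \<Delta>}
      (\<lambda>s. exp ((s - real (Suc j) * \<Delta>) / \<tau> k) * f1 s)
      - exp (-\<Delta> / (2 * \<tau> k)) * (f (real (Suc j) * \<Delta>) - f (real j * \<Delta>))\<bar>"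
      unfolding l_def using bk by (simp add: abs_mult)
    also have "\<dots> \<le> L"
    proof (cases "\<Delta> \<le> \<tau> k")
      case True
      have "\<bar>integral {real j * \<Delta>..real (Suc j) * \<Delta>}
        (\<lambda>s. exp ((s - real (Suc j) * \<Delta>) / \<tau> k) * f1 s)
        - exp (-\<Delta> / (2 * \<tau> k)) * (f (real (Suc j) * \<Delta>) - f (real j * \<Delta>))\<bar>
        \<le> M * (\<Delta> ^ 3 / (4 * \<tau> k) + \<Delta> ^ 3 / (8 * \<tau> k ^ 2))"
        using local_fine[OF d1 d2 c1 b1 b2 a0 ab bT tau] True unfolding dd by simp
      thus ?thesis unfolding L_def using True bk by (simp add: mult_left_mono)
    next
      case False
      have "\<bar>integral {real j * \<Delta>..real (Suc j) * \<Delta>}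
        (\<lambda>s. exp ((s - real (Suc j) * \<Delta>) / \<tau> k) * f1 s)
        - exp (-\<Delta> / (2 * \<tau> k)) * (f (real (Suc j) * \<Delta>) - f (real j * \<Delta>))\<bar>
        \<le> 2 * M * \<Delta>"
        using local_crude[OF d1 c1 b1 a0 less_imp_le[OF ab] bT tau] unfolding dd by simp
      thus ?thesis unfolding L_def using False bk by (simp add: mult_left_mono)
    qed
    finally show ?thesis .
  qed
  have r0: "0 \<le> r" and r1: "r < 1" using \<Delta>0 tau by (auto simp: r_def)
  have L0: "0 \<le> L" unfolding L_def using bk M0 \<Delta>0 tau by auto
  have EB: "\<bar>E n\<bar> \<le> L / (1 - r)" by (rule propagate[OF E0 ES lb r0 r1 L0 n])
  have "L / (1 - r) \<le> \<beta> k * (1/2 + 1/(4 * \<tau> k) + 4 / \<tau> k) * \<Delta>^2 * M"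
  proof (cases "\<Delta> \<le> \<tau> k")
    case True
    have y: "\<Delta> / \<tau> k / 2 \<le> 1 - r"
    proof -
      have "exp (-(\<Delta> / \<tau> k)) = r" unfolding r_def by simp
      moreover have "\<Delta> / \<tau> k / 2 \<le> 1 - exp (-(\<Delta> / \<tau> k))"
        by (rule one_minus_exp_lower) (use True tau \<Delta>0 in auto)
      ultimately show ?thesis by simp
    qed
    have pos: "0 < \<Delta> / \<tau> k / 2" using tau \<Delta>0 by simp
    have ab: "0 < (1 - r) * (\<Delta> / \<tau> k / 2)" by (rule mult_pos_pos) (use r1 pos in auto)
    have "L / (1 - r) \<le> L / (\<Delta> / \<tau> k / 2)"
      by (rule divide_left_mono[OF y L0 ab])
    also have "\<dots> = \<beta> k * (1/2 + 1/(4 * \<tau> k)) * \<Delta>^2 * M"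
    proof -
      have "\<beta> k * (M * (\<Delta> ^ 3 / (4 * \<tau> k) + \<Delta> ^ 3 / (8 * \<tau> k ^ 2))) / (\<Delta> / \<tau> k / 2)
         = \<beta> k * (1/2 + 1/(4 * \<tau> k)) * \<Delta>^2 * M"
        using tau \<Delta>0 by (simp add: field_simps power2_eq_square power3_eq_cube)
      thus ?thesis unfolding L_def using True by simp
    qed
    also have "\<dots> \<le> \<beta> k * (1/2 + 1/(4 * \<tau> k) + 4 / \<tau> k) * \<Delta>^2 * M"
    proof -
      have "0 \<le> 4 / \<tau> k" using tau by simp
      hence cc: "1/2 + 1/(4 * \<tau> k) \<le> 1/2 + 1/(4 * \<tau> k) + 4 / \<tau> k" by linarith
      show ?thesis by (intro mult_right_mono mult_left_mono cc) (use bk M0 in auto)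
    qed
    finally show ?thesis .
  next
    case False
    have "1 \<le> \<Delta> / \<tau> k" using False tau by simp
    hence "r \<le> exp (-1)" unfolding r_def by simp
    moreover have "1 / 2 \<le> 1 - exp (-1::real)" using one_minus_exp_lower[of 1] by simp
    ultimately have y: "1 / 2 \<le> 1 - r" by linarith
    have "L / (1 - r) \<le> L / (1 / 2)"
      by (rule divide_left_mono[OF y L0]) (use y in simp)
    also have "\<dots> = \<beta> k * 4 * \<Delta> * M" unfolding L_def using False by simp
    also have "\<dots> \<le> \<beta> k * 4 * (\<Delta> * (\<Delta> / \<tau> k)) * M"
    proof -
      have "\<Delta> * 1 \<le> \<Delta> * (\<Delta> / \<tau> k)" using False tau \<Delta>0 by (intro mult_left_mono) (auto simp: field_simps)
      thus ?thesis using bk M0 by (intro mult_right_mono mult_left_mono) auto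
    qed
    also have "\<dots> = \<beta> k * (4 / \<tau> k) * \<Delta>^2 * M" by (simp add: power2_eq_square)
    also have "\<dots> \<le> \<beta> k * (1/2 + 1/(4 * \<tau> k) + 4 / \<tau> k) * \<Delta>^2 * M"
    proof -
      have "0 \<le> 1/(4 * \<tau> k)" using tau by simp
      hence cc: "4 / \<tau> k \<le> 1/2 + 1/(4 * \<tau> k) + 4 / \<tau> k" by linarith
      show ?thesis by (intro mult_right_mono mult_left_mono cc) (use bk M0 in auto)
    qed
    finally show ?thesis .
  qed
  thus ?thesis using EB unfolding E_def \<Delta>_def by simp
qed

lemma quad_antideriv: "((\<lambda>s. -(M * (b - s)^2 / 2)) has_real_derivative M * (b - x)) (at x within S)"
proof -
  have "((\<lambda>s. -(M * (b - s)^2 / 2)) has_real_derivative -(M * (of_nat 2 * ((0 - 1) * (b - x) ^ (2 - Suc 0))) / 2)) (at x within S)"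
    by (intro DERIV_minus DERIV_cdivide DERIV_cmult DERIV_power DERIV_diff DERIV_const DERIV_ident)
  thus ?thesis by (rule DERIV_cong) (simp add: field_simps)
qed

lemma beta0_error:
  assumes d1: "\<forall>t\<in>{0..T}. (f has_real_derivative f1 t) (at t within {0..T})"
    and d2: "\<forall>t\<in>{0..T}. (f1 has_real_derivative f2 t) (at t within {0..T})"
    and b2: "\<forall>t\<in>{0..T}. \<bar>f2 t\<bar> \<le> M"
    and ab: "0 \<le> a" "a < b" "b \<le> T"
  shows "\<bar>f1 b - (f b - f a) / (b - a)\<bar> \<le> M * (b - a) / 2"
proof -
  have I2: "(f1 has_integral (f b - f a)) {a..b}" using ftc_sub[OF d1, of a b] ab by simp
  have Ic: "((\<lambda>s. f1 b) has_integral (f1 b * (b - a))) {a..b}"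
    using has_integral_const_real[of "f1 b" a b] ab by (simp add: mult.commute)
  have Id: "((\<lambda>s. f1 b - f1 s) has_integral (f1 b * (b - a) - (f b - f a))) {a..b}"
    by (rule has_integral_diff[OF Ic I2])
  have Iq: "((\<lambda>s. M * (b - s)) has_integral (M * (b - a)^2 / 2)) {a..b}"
  proof -
    have "((\<lambda>s. M * (b - s)) has_integral (-(M * (b - b)^2 / 2) - -(M * (b - a)^2 / 2))) {a..b}"
    proof (rule fundamental_theorem_of_calculus)
      show "a \<le> b" using ab by simp
      fix x assume "x \<in> {a..b}"
      show "((\<lambda>s. -(M * (b - s)^2 / 2)) has_vector_derivative M * (b - x)) (at x within {a..b})"
        using quad_antideriv has_real_derivative_iff_has_vector_derivative by blast
    qed
    thus ?thesis by simp
  qed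
  have pt: "\<bar>f1 b - f1 s\<bar> \<le> M * (b - s)" if "s \<in> {a..b}" for s
    using lip_from_deriv[OF d2 b2, of b s] that ab by simp
  have up: "f1 b * (b - a) - (f b - f a) \<le> M * (b - a)^2 / 2"
    by (rule has_integral_le[OF Id Iq]) (use pt in force)
  have lo: "-(f1 b * (b - a) - (f b - f a)) \<le> M * (b - a)^2 / 2"
    by (rule has_integral_le[OF has_integral_neg[OF Id] Iq]) (use pt in force)
  have N: "\<bar>f1 b * (b - a) - (f b - f a)\<bar> \<le> M * (b - a)^2 / 2" using up lo by linarith
  have "f1 b - (f b - f a) / (b - a) = (f1 b * (b - a) - (f b - f a)) / (b - a)"
    using ab by (simp add: field_simps)
  hence "\<bar>f1 b - (f b - f a) / (b - a)\<bar> = \<bar>f1 b * (b - a) - (f b - f a)\<bar> / (b - a)"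
    using ab by simp
  also have "\<dots> \<le> (M * (b - a)^2 / 2) / (b - a)"
    by (rule divide_right_mono[OF N]) (use ab in simp)
  also have "\<dots> = M * (b - a) / 2" using ab by (simp add: power2_eq_square field_simps)
  finally show ?thesis .
qed


theorem lemma2:
  fixes \<alpha> :: real and N :: nat and \<beta> \<tau> :: "nat \<Rightarrow> real"
  assumes "0 < \<alpha>" and "\<alpha> < 1" and "N \<ge> 1"
    and "\<forall>k\<in>{0..N}. \<beta> k > 0" and "\<forall>k\<in>{1..N}. \<tau> k > 0"
  shows "\<exists>C>0. \<forall>T f f1 f2 (NT::nat) n.
           T > 0 \<longrightarrow> NT \<ge> 1 \<longrightarrow> W3inf T f f1 f2 \<longrightarrow> n \<in> {1..NT} \<longrightarrow>
           \<bar>prony_cont N \<beta> \<tau> f1 (real n * (T / real NT)) - prony_disc N \<beta> \<tau> f (T / real NT) n\<bar>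
             \<le> (T / real NT) * (\<beta> 0 / 2 + C * (T / real NT)) * w3_norm T f f1 f2"
proof -
  define Ck where "Ck k = \<beta> k * (1/2 + 1/(4 * \<tau> k) + 4 / \<tau> k)" for k
  define C where "C = 1 + (\<Sum>k=1..N. Ck k)"
  have bpos: "0 < \<beta> k" if "k \<in> {1..N}" for k using assms(4) that by auto
  have tpos: "0 < \<tau> k" if "k \<in> {1..N}" for k using assms(5) that by auto
  have b00: "0 < \<beta> 0" using assms(4) by auto
  have Ck0: "0 \<le> Ck k" if "k \<in> {1..N}" for k
    unfolding Ck_def using bpos[OF that] tpos[OF that] by (intro mult_nonneg_nonneg add_nonneg_nonneg) auto
  have S0: "0 \<le> (\<Sum>k=1..N. Ck k)" using Ck0 by (intro sum_nonneg) auto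
  have C0: "0 < C" unfolding C_def using S0 by linarith
  show ?thesis
  proof (intro exI[of _ C] conjI allI impI)
    show "0 < C" by (rule C0)
    fix T f f1 f2 and NT :: nat and n
    assume T: "0 < T" and NT: "1 \<le> NT" and W: "W3inf T f f1 f2" and n: "n \<in> {1..NT}"
    define M where "M = w3_norm T f f1 f2"
    define \<Delta> where "\<Delta> = T / real NT"
    have b1: "\<forall>t\<in>{0..T}. \<bar>f1 t\<bar> \<le> M" and b2: "\<forall>t\<in>{0..T}. \<bar>f2 t\<bar> \<le> M"
      using norm_bounds[OF W] unfolding M_def by auto
    have d1: "\<forall>t\<in>{0..T}. (f has_real_derivative f1 t) (at t within {0..T})"
     and d2: "\<forall>t\<in>{0..T}. (f1 has_real_derivative f2 t) (at t within {0..T})"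
      using W unfolding W3inf_def by auto
    have M0: "0 \<le> M" using b1 T by force
    have \<Delta>0: "0 < \<Delta>" using T NT by (simp add: \<Delta>_def)
    have n1: "1 \<le> n" and nN: "n \<le> NT" using n by auto
    have dn: "real n * \<Delta> - real (n - 1) * \<Delta> = \<Delta>" using n1 by (simp add: of_nat_diff algebra_simps)
    have a0: "0 \<le> real (n - 1) * \<Delta>" using \<Delta>0 by simp
    have ab: "real (n - 1) * \<Delta> < real n * \<Delta>" using dn \<Delta>0 by linarith
    have bT: "real n * \<Delta> \<le> T"
    proof -
      have "real n * \<Delta> \<le> real NT * \<Delta>" using nN \<Delta>0 by (intro mult_right_mono) auto
      also have "\<dots> = T" using NT by (simp add: \<Delta>_def)
      finally show ?thesis .
    qed
    have B0: "\<bar>f1 (real n * \<Delta>) - (f (real n * \<Delta>) - f (real (n - 1) * \<Delta>)) / \<Delta>\<bar> \<le> M * \<Delta> / 2"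
      using beta0_error[OF d1 d2 b2 a0 ab bT] unfolding dn .
    have Bk: "\<bar>q_cont \<beta> \<tau> f1 k (real n * \<Delta>) - q_disc \<beta> \<tau> f \<Delta> k n\<bar> \<le> Ck k * \<Delta>^2 * M"
      if k: "k \<in> {1..N}" for k
      using qk_error[where \<tau>=\<tau> and k=k and \<beta>=\<beta>, OF W T NT tpos[OF k] less_imp_le[OF bpos[OF k]] b1 b2 nN] unfolding Ck_def \<Delta>_def .
    have eq: "prony_cont N \<beta> \<tau> f1 (real n * \<Delta>) - prony_disc N \<beta> \<tau> f \<Delta> n
        = \<beta> 0 * (f1 (real n * \<Delta>) - (f (real n * \<Delta>) - f (real (n - 1) * \<Delta>)) / \<Delta>)
          + (\<Sum>k=1..N. q_cont \<beta> \<tau> f1 k (real n * \<Delta>) - q_disc \<beta> \<tau> f \<Delta> k n)"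
      unfolding prony_cont_def prony_disc_def by (simp add: sum_subtractf algebra_simps diff_divide_distrib)
    have "\<bar>prony_cont N \<beta> \<tau> f1 (real n * \<Delta>) - prony_disc N \<beta> \<tau> f \<Delta> n\<bar>
        \<le> \<beta> 0 * \<bar>f1 (real n * \<Delta>) - (f (real n * \<Delta>) - f (real (n - 1) * \<Delta>)) / \<Delta>\<bar>
          + (\<Sum>k=1..N. \<bar>q_cont \<beta> \<tau> f1 k (real n * \<Delta>) - q_disc \<beta> \<tau> f \<Delta> k n\<bar>)"
      unfolding eq using b00 by (intro order_trans[OF abs_triangle_ineq] add_mono sum_abs) (simp add: abs_mult)
    also have "\<dots> \<le> \<beta> 0 * (M * \<Delta> / 2) + (\<Sum>k=1..N. Ck k * \<Delta>^2 * M)"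
      using B0 Bk b00 by (intro add_mono mult_left_mono sum_mono) auto
    also have "\<dots> = \<beta> 0 * (M * \<Delta> / 2) + (\<Sum>k=1..N. Ck k) * (\<Delta>^2 * M)"
      by (simp add: sum_distrib_right mult.assoc)
    also have "\<dots> \<le> \<beta> 0 * (M * \<Delta> / 2) + C * (\<Delta>^2 * M)"
      using M0 unfolding C_def by (intro add_left_mono mult_right_mono) auto
    also have "\<dots> = \<Delta> * (\<beta> 0 / 2 + C * \<Delta>) * M" by (simp add: power2_eq_square algebra_simps)
    finally show "\<bar>prony_cont N \<beta> \<tau> f1 (real n * (T / real NT)) - prony_disc N \<beta> \<tau> f (T / real NT) n\<bar>
             \<le> (T / real NT) * (\<beta> 0 / 2 + C * (T / real NT)) * w3_norm T f f1 f2"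
      unfolding \<Delta>_def M_def .
  qed
qed

end
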